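(* For all integers $0\le a\le b$, $\mathrm{Incr}(\zeta(a,b))=\zeta(a,b+1)$; that is, applying $\mathrm{Incr}$ to the $\zeta$-decomposition of $B(a,b)$ yields a list of bucket structures whose buckets are exactly those of the $\zeta$-decomposition of $B(a,b+1)$, each carrying uniformly distributed random samples of its bucket, with all samples mutually independent.
   Context: Let $p_0,p_1,\dots$ be a stream. For integers $x<y$, the bucket $B(x,y)=\{p_i: x\le i\le y-1\}$. A bucket structure $BS(x,y)$ stores $p_x$, $x$, $y$, the timestamp of $p_x$, and two random samples $R_{x,y},Q_{x,y}$, each uniformly distributed on $B(x,y)$, together with the indices of the sampled elements. Logarithms are base 2. The $\zeta$-decomposition is the ordered list of bucket structures (with all samples mutually independent) defined by $\zeta(b,b)=\langle BS(b,b+1)\rangle$ and, for $a<b$, $\zeta(a,b)=\langle BS(a,c),\zeta(c,b)\rangle$ where $c=a+2^{\lfloor\log(b+1-a)\rfloor-1}$. Given the new element $p_{b+1}$, the operator $\mathrm{Incr}$ is defined by $\mathrm{Incr}(\zeta(b,b))=\langle BS(b,b+1),BS(b+1,b+2)\rangle$ (the new structure with fresh independent samples), and for $a<b$, $\mathrm{Incr}(\zeta(a,b))=\langle BS(a,v),\mathrm{Incr}(\zeta(v,b))\rangle$, where: if $\lfloor\log(b+2-a)\rfloor=\lfloor\log(b+1-a)\rfloor$ then $v=c$ and $BS(a,c)$ (the first structure of $\zeta(a,b)$) is kept unchanged; otherwise, letting $BS(a,c),BS(c,d)$ be the first two structures of $\zeta(a,b)$, $v=d$ and $BS(a,d)$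 is formed by merging them: $R_{a,d}$ equals $R_{a,c}$ with probability $1/2$ and $R_{c,d}$ otherwise (using a fresh independent coin), and likewise for $Q_{a,d}$ with an independent coin. *)

theory Defs
  imports "HOL-Probability.Probability"
begin

text \<open>A bucket structure BS(x,y) is represented by (x, y, r, q), where r and q are
  the indices of the two sampled elements R and Q (uniform on {x..<y}).
  The stored p_x and its timestamp are deterministic functions of x and are omitted.\<close>

type_synonym bstruct = "nat \<times> nat \<times> nat \<times> nat"

definition bx :: "bstruct \<Rightarrow> nat" where "bx s = fst s"
definition by' :: "bstruct \<Rightarrow> nat" where "by' s = fst (snd s)"
definition bR :: "bstruct \<Rightarrow> nat" where "bR s = fst (snd (snd s))"
definition bQ :: "bstruct \<Rightarrow> nat" where "bQ s = snd (snd (snd s))"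

function zbuckets :: "nat \<Rightarrow> nat \<Rightarrow> (nat \<times> nat) list" where
  "zbuckets a b =
     (if a < b then
        (let c = a + 2 ^ nat (\<lfloor>log 2 (real (b + 1 - a))\<rfloor> - 1)
         in (a, c) # zbuckets c b)
      else [(b, b + 1)])"
  by auto
termination
proof (relation "Wellfounded.measure (\<lambda>(a, b). b - a)")
  fix a b :: nat and c
  assume ab: "a < b" and c: "c = a + 2 ^ nat (\<lfloor>log 2 (real (b + 1 - a))\<rfloor> - 1)"
  have aux: "\<And>k::nat. a < b \<Longrightarrow> b - (a + 2 ^ k) < b - a"
    by (simp add: diff_less_mono2)
  from aux[OF ab] c show "((c, b), a, b) \<in> Wellfounded.measure (\<lambda>(a, b). b - a)" by simp
qed auto

fun with_samples :: "(nat \<times> nat) list \<Rightarrow> bstruct list pmf" where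
  "with_samples [] = return_pmf []"
| "with_samples ((x, y) # bs) =
     do { r \<leftarrow> pmf_of_set {x..<y};
          q \<leftarrow> pmf_of_set {x..<y};
          rest \<leftarrow> with_samples bs;
          return_pmf ((x, y, r, q) # rest) }"

definition zeta :: "nat \<Rightarrow> nat \<Rightarrow> bstruct list pmf" where
  "zeta a b = with_samples (zbuckets a b)"

definition fresh :: "nat \<Rightarrow> bstruct pmf" where
  "fresh b = do { r \<leftarrow> pmf_of_set {b+1..<b+2};
                  q \<leftarrow> pmf_of_set {b+1..<b+2};
                  return_pmf (b + 1, b + 2, r, q) }"

text \<open>The operator Incr, upon arrival of p_(b+1), applied to a decomposition whose
  last index is b; a is read off the first structure.\<close>
fun incr :: "nat \<Rightarrow> bstruct list \<Rightarrow> bstruct list pmf" where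
  "incr b [] = return_pmf []"
| "incr b [s] =
     (if bx s = b then map_pmf (\<lambda>n. [s, n]) (fresh b) else return_pmf [s])"
| "incr b (s # t # rest) =
     (if bx s = b then map_pmf (\<lambda>n. [s, n]) (fresh b)
      else if \<lfloor>log 2 (real (b + 2 - bx s))\<rfloor> = \<lfloor>log 2 (real (b + 1 - bx s))\<rfloor>
      then map_pmf (Cons s) (incr b (t # rest))
      else do { c1 \<leftarrow> bernoulli_pmf (1/2);
                c2 \<leftarrow> bernoulli_pmf (1/2);
                tl' \<leftarrow> incr b rest;
                return_pmf ((bx s, by' t, if c1 then bR s else bR t,
                                          if c2 then bQ s else bQ t) # tl') })"

end

theory Submission imports Defs begin

declare zbuckets.simps[simp del]

lemma flog: "2^k \<le> n \<Longrightarrow> n < 2^(k+1) \<Longrightarrow> \<lfloor>log 2 (real n)\<rfloor> = int k"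
proof -
  assume h: "2^k \<le> n" "n < 2^(k+1)"
  have n0: "real n > 0" using h(1) less_le_trans[of 0 "2^k" n] by simp
  have e1: "(2::real) powr real_of_int (int k) = 2^k" by (simp add: powr_realpow)
  have e2: "(2::real) powr (real_of_int (int k) + 1) = 2^(k+1)"
    using powr_realpow[of 2 "k+1"] by (simp add: add.commute)
  have r1: "(2::real)^k \<le> real n" using h(1) by (metis of_nat_le_iff of_nat_numeral of_nat_power)
  have r2: "real n < (2::real)^(k+1)" using h(2) by (metis of_nat_less_iff of_nat_numeral of_nat_power)
  show ?thesis using floor_log_eq_powr_iff[OF n0, of 2 "int k"] e1 e2 r1 r2 by simp
qed

lemma zb_step:
  assumes "a < b" "2^k \<le> b+1-a" "b+1-a < 2^(k+1)"
  shows "zbuckets a b = (a, a+2^(k-1)) # zbuckets (a+2^(k-1)) b"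
proof -
  have f: "nat (\<lfloor>log 2 (real (b + 1 - a))\<rfloor> - 1) = k - 1"
    using flog[OF assms(2,3)] by simp
  show ?thesis
    apply (subst zbuckets.simps)
    apply (simp only: f Let_def if_True assms(1))
    done
qed

lemma zb_base: "zbuckets b b = [(b, b+1)]"
  by (subst zbuckets.simps) (simp del: zbuckets.simps)

lemma zb_ne: "zbuckets a b \<noteq> []"
  by (subst zbuckets.simps) (simp del: zbuckets.simps add: Let_def)

lemma set_ws: "l \<in> set_pmf (with_samples bs) \<Longrightarrow> map (\<lambda>s. (bx s, by' s)) l = bs"
  by (induction bs arbitrary: l rule: with_samples.induct) (auto simp: bx_def by'_def)

lemma zeta_cons: "zbuckets a b = (x, y) # bs \<Longrightarrow> zeta a b =
   bind_pmf (pmf_of_set {x..<y}) (\<lambda>r. bind_pmf (pmf_of_set {x..<y}) (\<lambda>q.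
     bind_pmf (with_samples bs) (\<lambda>rest. return_pmf ((x, y, r, q) # rest))))"
  by (simp add: zeta_def)

lemma incr_keep: assumes "bx s \<noteq> b" "\<lfloor>log 2 (real (b + 2 - bx s))\<rfloor> = \<lfloor>log 2 (real (b + 1 - bx s))\<rfloor>"
   "l \<noteq> []" shows "incr b (s # l) = map_pmf (Cons s) (incr b l)"
proof -
  obtain t rest where l: "l = t # rest" using assms(3) by (cases l) auto
  show ?thesis unfolding l incr.simps(3) using assms(1,2) by (simp only: if_False if_True simp_thms)
qed

lemma swap3: "bind_pmf W (\<lambda>w. bind_pmf E (\<lambda>c1. bind_pmf F (\<lambda>c2. X w c1 c2)))
   = bind_pmf E (\<lambda>c1. bind_pmf F (\<lambda>c2. bind_pmf W (\<lambda>w. X w c1 c2)))"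
proof -
  have "bind_pmf W (\<lambda>w. bind_pmf E (\<lambda>c1. bind_pmf F (\<lambda>c2. X w c1 c2)))
     = bind_pmf E (\<lambda>c1. bind_pmf W (\<lambda>w. bind_pmf F (\<lambda>c2. X w c1 c2)))"
    by (rule bind_commute_pmf)
  also have "\<dots> = bind_pmf E (\<lambda>c1. bind_pmf F (\<lambda>c2. bind_pmf W (\<lambda>w. X w c1 c2)))"
    by (subst bind_commute_pmf) (rule refl)
  finally show ?thesis .
qed

lemma reorder0:
 "bind_pmf A (\<lambda>r. bind_pmf A (\<lambda>q. bind_pmf B (\<lambda>r2. bind_pmf B (\<lambda>q2. bind_pmf W (\<lambda>w.
    bind_pmf E (\<lambda>c1. bind_pmf E (\<lambda>c2. X r q r2 q2 w c1 c2)))))))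
 = bind_pmf A (\<lambda>r. bind_pmf B (\<lambda>r2. bind_pmf E (\<lambda>c1. bind_pmf A (\<lambda>q. bind_pmf B (\<lambda>q2.
    bind_pmf E (\<lambda>c2. bind_pmf W (\<lambda>w. X r q r2 q2 w c1 c2)))))))"
  apply (subst swap3[of W E E])
  apply (subst bind_commute_pmf[of B E])
  apply (subst swap3[of A B E])
  apply (rule refl)
  done

lemma reorder:
 "bind_pmf A (\<lambda>r. bind_pmf A (\<lambda>q. bind_pmf B (\<lambda>r2. bind_pmf B (\<lambda>q2. bind_pmf W (\<lambda>w.
    bind_pmf E (\<lambda>c1. bind_pmf E (\<lambda>c2. bind_pmf (I w) (\<lambda>tl.
      return_pmf (g (if c1 then r else r2) (if c2 then q else q2) tl)))))))))
 = bind_pmf (bind_pmf A (\<lambda>r. bind_pmf B (\<lambda>r2. bind_pmf E (\<lambda>c1. return_pmf (if c1 then r else r2)))))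
     (\<lambda>R. bind_pmf (bind_pmf A (\<lambda>q. bind_pmf B (\<lambda>q2. bind_pmf E (\<lambda>c2. return_pmf (if c2 then q else q2)))))
     (\<lambda>Q. bind_pmf (bind_pmf W I) (\<lambda>tl. return_pmf (g R Q tl))))"
  unfolding reorder0 by (simp only: bind_assoc_pmf bind_return_pmf)

lemma mix:
  fixes A B :: "nat set"
  assumes "finite A" "finite B" "A \<noteq> {}" "B \<noteq> {}" "A \<inter> B = {}" "card A = card B"
  shows "bind_pmf (pmf_of_set A) (\<lambda>x. bind_pmf (pmf_of_set B) (\<lambda>y.
           bind_pmf (bernoulli_pmf (1/2)) (\<lambda>c. return_pmf (if c then x else y))))
         = pmf_of_set (A \<union> B)"
proof -
  have "bind_pmf (pmf_of_set A) (\<lambda>x. bind_pmf (pmf_of_set B) (\<lambda>y.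
           bind_pmf (bernoulli_pmf (1/2)) (\<lambda>c. return_pmf (if c then x else y))))
      = bind_pmf (pmf_of_set A) (\<lambda>x. bind_pmf (bernoulli_pmf (1/2)) (\<lambda>c. bind_pmf (pmf_of_set B) (\<lambda>y.
            return_pmf (if c then x else y))))"
    by (subst bind_commute_pmf) (rule refl)
  also have "\<dots> = bind_pmf (bernoulli_pmf (1/2)) (\<lambda>c. bind_pmf (pmf_of_set A) (\<lambda>x. bind_pmf (pmf_of_set B) (\<lambda>y.
            return_pmf (if c then x else y))))"
    by (rule bind_commute_pmf)
  also have "\<dots> = bind_pmf (bernoulli_pmf (1/2)) (\<lambda>c. if c then pmf_of_set A else pmf_of_set B)"
    by (rule bind_pmf_cong) (auto simp: bind_return_pmf')
  also have "\<dots> = pmf_of_set (A \<union> B)"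
  proof (rule pmf_eqI)
    fix i
    show "pmf (bind_pmf (bernoulli_pmf (1/2)) (\<lambda>c. if c then pmf_of_set A else pmf_of_set B)) i
        = pmf (pmf_of_set (A \<union> B)) i"
      using assms by (simp add: pmf_bind card_Un_disjoint indicator_def) (auto simp: disjoint_iff)
  qed
  finally show ?thesis .
qed

lemma main: "a \<le> b \<Longrightarrow> bind_pmf (zeta a b) (incr b) = zeta a (b + 1)"
proof (induction "b - a" arbitrary: a rule: less_induct)
  case less
  show ?case
  proof (cases "a = b")
    case True
    have z1: "zbuckets b (Suc b) = [(b, Suc b), (Suc b, Suc (Suc b))]"
      using zb_step[of b "b+1" 1] zb_base[of "b+1"] by simp
    show ?thesis using True
      by (simp add: zeta_def z1 zb_base fresh_def map_pmf_def bind_assoc_pmf bind_return_pmf bx_def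
           del: zbuckets.simps)
  next
    case False
    hence ab: "a < b" using less.prems by simp
    obtain k where k: "2^k \<le> b+1-a" "b+1-a < 2^(k+1)"
      using ex_power_ivl1[of 2 "b+1-a"] ab by force
    have k1: "k \<ge> 1"
    proof (rule ccontr)
      assume "\<not> k \<ge> 1" hence "k = 0" by simp
      thus False using k ab by simp
    qed
    define m where "m = (2::nat)^(k-1)"
    have m1: "m \<ge> 1" unfolding m_def by simp
    have pk: "(2::nat)^k = 2*m" unfolding m_def using k1
      by (metis Suc_diff_1 less_le_trans power_Suc zero_less_one)
    have pk1: "(2::nat)^(k+1) = 4*m" using pk by simp
    define c where "c = a + m"
    have zba: "zbuckets a b = (a, c) # zbuckets c b"
      using zb_step[OF ab k] unfolding c_def m_def .
    have cb: "c \<le> b" "a < c" using k pk m1 unfolding c_def by auto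
    have IHc: "bind_pmf (zeta c b) (incr b) = zeta c (b + 1)"
      using less.hyps[of c] cb by simp
    show ?thesis
    proof (cases "b+2-a < 2^(k+1)")
      case True
      have zba1: "zbuckets a (b+1) = (a, c) # zbuckets c (b+1)"
        using zb_step[of a "b+1" k] ab k True unfolding c_def m_def by simp
      have cond: "\<lfloor>log 2 (real (b + 2 - a))\<rfloor> = \<lfloor>log 2 (real (b + 1 - a))\<rfloor>"
        using flog[OF k] flog[of k "b+2-a"] k True by simp
      have "bind_pmf (zeta a b) (incr b) =
         bind_pmf (pmf_of_set {a..<c}) (\<lambda>r. bind_pmf (pmf_of_set {a..<c}) (\<lambda>q.
           bind_pmf (zeta c b) (\<lambda>rest. incr b ((a, c, r, q) # rest))))"
        unfolding zeta_def zba by (simp add: bind_assoc_pmf bind_return_pmf)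
      also have "\<dots> = bind_pmf (pmf_of_set {a..<c}) (\<lambda>r. bind_pmf (pmf_of_set {a..<c}) (\<lambda>q.
           bind_pmf (zeta c b) (\<lambda>rest. map_pmf (Cons (a, c, r, q)) (incr b rest))))"
      proof (intro bind_pmf_cong refl)
        fix r q rest assume "rest \<in> set_pmf (zeta c b)"
        hence "rest \<noteq> []" using set_ws[of rest "zbuckets c b"] zb_ne[of c b]
          unfolding zeta_def by auto
        thus "incr b ((a, c, r, q) # rest) = map_pmf (Cons (a, c, r, q)) (incr b rest)"
          using incr_keep[of "(a,c,r,q)" b rest] cond ab by (simp add: bx_def)
      qed
      also have "\<dots> = bind_pmf (pmf_of_set {a..<c}) (\<lambda>r. bind_pmf (pmf_of_set {a..<c}) (\<lambda>q.
           map_pmf (Cons (a, c, r, q)) (zeta c (b+1))))"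
        by (simp add: map_bind_pmf[symmetric] IHc)
      also have "\<dots> = zeta a (b+1)"
        unfolding zeta_def zba1 by (simp add: map_pmf_def)
      finally show ?thesis .
    next
      case False
      hence eq: "b+2-a = 4*m" using k pk1 by simp
      define d where "d = c + m"
      have cb': "c < b" using eq m1 ab unfolding c_def by simp
      have h1: "2^k \<le> b+1-c" using eq pk m1 unfolding c_def by linarith
      have h2: "b+1-c < 2^(k+1)" using eq pk1 m1 unfolding c_def by linarith
      have zbc: "zbuckets c b = (c, d) # zbuckets d b"
        using zb_step[OF cb' h1 h2] by (simp only: d_def m_def)
      have db: "d \<le> b" "a < d" using eq m1 unfolding d_def c_def by auto
      have IHd: "bind_pmf (zeta d b) (incr b) = zeta d (b + 1)"
        using less.hyps[of d] db by simp
      have h3: "2^(k+1) \<le> b+1+1-a" using eq pk1 by simp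
      have h4: "b+1+1-a < 2^(k+1+1)" using eq pk1 m1 by simp
      have ab1: "a < b+1" using ab by simp
      have dd: "d = a + 2^(k+1-1)" using pk unfolding d_def c_def by simp
      have zba1: "zbuckets a (b+1) = (a, d) # zbuckets d (b+1)"
        unfolding dd by (rule zb_step[OF ab1 h3 h4])
      have f2: "\<lfloor>log 2 (real (b + 2 - a))\<rfloor> = int (k+1)"
        apply (rule flog) using h3 h4 by simp_all
      have f1: "\<lfloor>log 2 (real (b + 1 - a))\<rfloor> = int k" by (rule flog[OF k])
      have ncond: "\<lfloor>log 2 (real (b + 2 - a))\<rfloor> \<noteq> \<lfloor>log 2 (real (b + 1 - a))\<rfloor>"
        unfolding f1 f2 by simp
      let ?A = "pmf_of_set {a..<c}" and ?B = "pmf_of_set {c..<d}" and ?E = "bernoulli_pmf (1/2)"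
      have "bind_pmf (zeta a b) (incr b) =
         bind_pmf ?A (\<lambda>r. bind_pmf ?A (\<lambda>q. bind_pmf ?B (\<lambda>r2. bind_pmf ?B (\<lambda>q2.
           bind_pmf (zeta d b) (\<lambda>rest. incr b ((a, c, r, q) # (c, d, r2, q2) # rest))))))"
        unfolding zeta_def zba zbc by (simp add: bind_assoc_pmf bind_return_pmf)
      also have "\<dots> = bind_pmf ?A (\<lambda>r. bind_pmf ?A (\<lambda>q. bind_pmf ?B (\<lambda>r2. bind_pmf ?B (\<lambda>q2.
           bind_pmf (zeta d b) (\<lambda>rest. bind_pmf ?E (\<lambda>c1. bind_pmf ?E (\<lambda>c2. bind_pmf (incr b rest) (\<lambda>tl.
             return_pmf ((\<lambda>R Q tl. (a, d, R, Q) # tl) (if c1 then r else r2) (if c2 then q else q2) tl)))))))))"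
        using ab ncond by (simp add: bx_def by'_def bR_def bQ_def cong: if_cong)
      also have "\<dots> = bind_pmf (pmf_of_set {a..<d}) (\<lambda>R. bind_pmf (pmf_of_set {a..<d}) (\<lambda>Q.
           bind_pmf (zeta d (b+1)) (\<lambda>tl. return_pmf ((a, d, R, Q) # tl))))"
      proof -
        have u: "{a..<c} \<union> {c..<d} = {a..<d}" using db cb unfolding d_def by auto
        have mx: "bind_pmf ?A (\<lambda>r. bind_pmf ?B (\<lambda>r2. bind_pmf ?E (\<lambda>c1. return_pmf (if c1 then r else r2))))
            = pmf_of_set {a..<d}"
          using mix[of "{a..<c}" "{c..<d}"] cb db u unfolding d_def c_def by auto
        show ?thesis unfolding reorder[of ?A ?B "zeta d b" ?E "incr b" "\<lambda>R Q tl. (a,d,R,Q)#tl"] mx IHd by simp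
      qed
      also have "\<dots> = zeta a (b+1)"
        unfolding zeta_def zba1 by simp
      finally show ?thesis .
    qed
  qed
qed

theorem lemma4p1:
  fixes a b :: nat
  assumes "a \<le> b"
  shows "bind_pmf (zeta a b) (incr b) = zeta a (b + 1)"
  using main[OF assms] .

end
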